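(* Let $G=(V,A)$ be a minimally Eulerian digraph. Then $|A| \le \sqrt{2(|V|-1)}\,|V| + |V| - 1$.
   Context: Digraphs are simple. A connected digraph is Eulerian if every vertex has indegree equal to outdegree (equivalently, it has a closed walk using every arc exactly once). A digraph $G$ is minimally Eulerian if it is a connected Eulerian digraph that contains no proper connected Eulerian spanning subgraph (a subgraph on all vertices of $G$ with a proper subset of the arcs); equivalently, for every directed cycle $C$ of $G$, the digraph $(V, A\setminus A(C))$ is disconnected. *)

theory Defs
  imports Complex_Main
begin

text \<open>A simple digraph on a finite vertex set V with arc set A: arcs are ordered
pairs of distinct vertices of V (no loops; no parallel arcs since A is a set;
opposite arcs are allowed).\<close>
definition simple_digraph :: "'a set \<Rightarrow> ('a \<times> 'a) set \<Rightarrow> bool" where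
  "simple_digraph V A \<longleftrightarrow> finite V \<and> A \<subseteq> V \<times> V \<and> (\<forall>v. (v, v) \<notin> A)"

definition connected_digraph :: "'a set \<Rightarrow> ('a \<times> 'a) set \<Rightarrow> bool" where
  "connected_digraph V A \<longleftrightarrow> V \<noteq> {} \<and>
     (\<forall>u\<in>V. \<forall>v\<in>V. (u, v) \<in> (A \<union> A\<inverse>)\<^sup>*)"

definition indeg :: "('a \<times> 'a) set \<Rightarrow> 'a \<Rightarrow> nat" where
  "indeg A v = card {u. (u, v) \<in> A}"

definition outdeg :: "('a \<times> 'a) set \<Rightarrow> 'a \<Rightarrow> nat" where
  "outdeg A v = card {w. (v, w) \<in> A}"

definition eulerian_digraph :: "'a set \<Rightarrow> ('a \<times> 'a) set \<Rightarrow> bool" where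
  "eulerian_digraph V A \<longleftrightarrow> connected_digraph V A \<and> (\<forall>v\<in>V. indeg A v = outdeg A v)"

definition minimally_eulerian :: "'a set \<Rightarrow> ('a \<times> 'a) set \<Rightarrow> bool" where
  "minimally_eulerian V A \<longleftrightarrow> simple_digraph V A \<and> eulerian_digraph V A \<and>
     \<not> (\<exists>A'. A' \<subset> A \<and> eulerian_digraph V A')"

end

theory Submission
  imports Defs
begin


lemma crossing:
  assumes "(u, w) \<in> R\<^sup>*" "u \<in> S" "w \<notin> S"
  shows "\<exists>x y. (x, y) \<in> R \<and> x \<in> S \<and> y \<notin> S"
  using assms
proof (induction rule: rtrancl_induct)
  case base then show ?case by simp
next
  case (step y z)
  then show ?case by (cases "y \<in> S") auto
qed

lemma sym_reach:
  assumes "(u, v) \<in> (T \<union> T\<inverse>)\<^sup>*"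
  shows "(v, u) \<in> (T \<union> T\<inverse>)\<^sup>*"
proof -
  have "(v, u) \<in> ((T \<union> T\<inverse>)\<inverse>)\<^sup>*" using assms by (simp add: rtrancl_converseI)
  moreover have "(T \<union> T\<inverse>)\<inverse> = T \<union> T\<inverse>" by auto
  ultimately show ?thesis by simp
qed

lemma spanning_tree:
  assumes fin: "finite V" and sub: "A \<subseteq> V \<times> V" and con: "connected_digraph V A"
  shows "\<exists>T \<subseteq> A. card T \<le> card V - 1 \<and> connected_digraph V T"
proof -
  from con obtain v0 where v0: "v0 \<in> V" unfolding connected_digraph_def by auto
  from con have conn: "\<forall>u\<in>V. \<forall>v\<in>V. (u, v) \<in> (A \<union> A\<inverse>)\<^sup>*" unfolding connected_digraph_def by auto
  have grow: "k + 1 \<le> card V \<Longrightarrow> \<exists>S T. v0 \<in> S \<and> S \<subseteq> V \<and> card S = k + 1 \<and> T \<subseteq> A \<and> card T \<le> k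
      \<and> (\<forall>a\<in>S. (v0, a) \<in> (T \<union> T\<inverse>)\<^sup>*)" for k
  proof (induction k)
    case 0
    show ?case
      by (rule exI[of _ "{v0}"], rule exI[of _ "{}"]) (use v0 in auto)
  next
    case (Suc k)
    then obtain S T where S: "v0 \<in> S" "S \<subseteq> V" "card S = k + 1" "T \<subseteq> A" "card T \<le> k"
      "\<forall>a\<in>S. (v0, a) \<in> (T \<union> T\<inverse>)\<^sup>*" by auto
    have "S \<noteq> V" using S(3) Suc.prems by auto
    then obtain w where w: "w \<in> V" "w \<notin> S" using S(2) by auto
    have "(v0, w) \<in> (A \<union> A\<inverse>)\<^sup>*" using conn v0 w by auto
    from crossing[OF this S(1) w(2)] obtain x y where xy: "(x, y) \<in> A \<union> A\<inverse>" "x \<in> S" "y \<notin> S" by blast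
    define e where "e = (if (x, y) \<in> A then (x, y) else (y, x))"
    have eA: "e \<in> A" using xy(1) by (auto simp: e_def)
    have yV: "y \<in> V" using xy(1) sub by auto
    have exy: "(x, y) \<in> insert e T \<union> (insert e T)\<inverse>" by (auto simp: e_def)
    have finS: "finite S" using S(2) fin finite_subset by auto
    have finT: "finite T" using S(4) sub fin finite_subset[of A "V \<times> V"] finite_subset by blast
    have "(v0, x) \<in> (T \<union> T\<inverse>)\<^sup>*" using S(6) xy(2) by auto
    moreover have "(T \<union> T\<inverse>)\<^sup>* \<subseteq> (insert e T \<union> (insert e T)\<inverse>)\<^sup>*" by (rule rtrancl_mono) auto
    ultimately have r: "(v0, x) \<in> (insert e T \<union> (insert e T)\<inverse>)\<^sup>*" by auto
    have "(v0, y) \<in> (insert e T \<union> (insert e T)\<inverse>)\<^sup>*" using rtrancl_into_rtrancl[OF r exy] .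
    show ?case
    proof (rule exI[of _ "insert y S"], rule exI[of _ "insert e T"], intro conjI)
      show "card (insert y S) = Suc k + 1" using finS xy(3) S(3) by simp
      show "card (insert e T) \<le> Suc k" using S(5) finT
        by (simp add: card_insert_if)
      show "\<forall>a\<in>insert y S. (v0, a) \<in> (insert e T \<union> (insert e T)\<inverse>)\<^sup>*"
        using \<open>(v0, y) \<in> _\<close> S(6) \<open>(T \<union> T\<inverse>)\<^sup>* \<subseteq> _\<close> by auto
    qed (use S eA yV in auto)
  qed
  have "card V - 1 + 1 \<le> card V" proof - have "card V > 0" using v0 fin card_gt_0_iff by blast then show ?thesis by simp qed
  from grow[OF this] obtain S T where S: "v0 \<in> S" "S \<subseteq> V" "card S = card V - 1 + 1" "T \<subseteq> A"
      "card T \<le> card V - 1" "\<forall>a\<in>S. (v0, a) \<in> (T \<union> T\<inverse>)\<^sup>*" by blast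
  have "S = V"
  proof (rule card_subset_eq[OF fin S(2)])
    show "card S = card V" using S(3) \<open>card V - 1 + 1 \<le> card V\<close> by linarith
  qed
  have "connected_digraph V T"
    unfolding connected_digraph_def
  proof (intro conjI ballI)
    show "V \<noteq> {}" using v0 by auto
    fix u v assume "u \<in> V" "v \<in> V"
    then have "(v0, u) \<in> (T \<union> T\<inverse>)\<^sup>*" "(v0, v) \<in> (T \<union> T\<inverse>)\<^sup>*" using S(6) \<open>S = V\<close> by auto
    then show "(u, v) \<in> (T \<union> T\<inverse>)\<^sup>*" using sym_reach rtrancl_trans by metis
  qed
  then show ?thesis using S(4,5) by blast
qed



lemma stable_image:
  assumes fin: "finite S" and ne: "S \<noteq> {}" and fS: "f ` S \<subseteq> S"
  shows "\<exists>P \<subseteq> S. P \<noteq> {} \<and> f ` P = P"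
proof -
  have step: "(f ^^ Suc k) ` S \<subseteq> (f ^^ k) ` S" for k
  proof -
    have "(f ^^ Suc k) ` S = (f ^^ k) ` (f ` S)" by (simp only: funpow_Suc_right image_comp o_def)
    also have "\<dots> \<subseteq> (f ^^ k) ` S" using fS by (rule image_mono)
    finally show ?thesis .
  qed
  have inS: "(f ^^ k) ` S \<subseteq> S" for k
    by (induction k) (use fS in auto)
  have "\<exists>k. (f ^^ Suc k) ` S = (f ^^ k) ` S"
  proof (rule ccontr)
    assume "\<not> ?thesis"
    then have lt: "card ((f ^^ Suc k) ` S) < card ((f ^^ k) ` S)" for k
      using step[of k] fin by (metis psubset_card_mono finite_imageI psubsetI)
    have "card ((f ^^ k) ` S) + k \<le> card S" for k
    proof (induction k)
      case 0 then show ?case by simp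
    next
      case (Suc k) then show ?case using lt[of k] by simp
    qed
    from this[of "card S + 1"] show False by simp
  qed
  then obtain k where k: "(f ^^ Suc k) ` S = (f ^^ k) ` S" by blast
  show ?thesis
  proof (intro exI conjI)
    show "(f ^^ k) ` S \<subseteq> S" by (rule inS)
    show "(f ^^ k) ` S \<noteq> {}" using ne by simp
    show "f ` (f ^^ k) ` S = (f ^^ k) ` S" using k by (simp add: image_comp)
  qed
qed

lemma fin_in: "finite A \<Longrightarrow> finite {u. (u, v) \<in> A}"
  by (rule finite_subset[of _ "fst ` A"]) force+
lemma fin_out: "finite A \<Longrightarrow> finite {w. (v, w) \<in> A}"
  by (rule finite_subset[of _ "snd ` A"]) force+

lemma indeg_diff: "finite A \<Longrightarrow> C \<subseteq> A \<Longrightarrow> indeg (A - C) v = indeg A v - indeg C v"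
  unfolding indeg_def
proof -
  assume "finite A" "C \<subseteq> A"
  have "{u. (u, v) \<in> A - C} = {u. (u, v) \<in> A} - {u. (u, v) \<in> C}" by auto
  moreover have "{u. (u, v) \<in> C} \<subseteq> {u. (u, v) \<in> A}" using \<open>C \<subseteq> A\<close> by auto
  ultimately show "card {u. (u, v) \<in> A - C} = card {u. (u, v) \<in> A} - card {u. (u, v) \<in> C}"
    using card_Diff_subset fin_in[OF finite_subset[OF \<open>C \<subseteq> A\<close> \<open>finite A\<close>]] by metis
qed

lemma outdeg_diff: "finite A \<Longrightarrow> C \<subseteq> A \<Longrightarrow> outdeg (A - C) v = outdeg A v - outdeg C v"
  unfolding outdeg_def
proof -
  assume "finite A" "C \<subseteq> A"
  have "{u. (v, u) \<in> A - C} = {u. (v, u) \<in> A} - {u. (v, u) \<in> C}" by auto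
  moreover have "{u. (v, u) \<in> C} \<subseteq> {u. (v, u) \<in> A}" using \<open>C \<subseteq> A\<close> by auto
  ultimately show "card {u. (v, u) \<in> A - C} = card {u. (v, u) \<in> A} - card {u. (v, u) \<in> C}"
    using card_Diff_subset fin_out[OF finite_subset[OF \<open>C \<subseteq> A\<close> \<open>finite A\<close>]] by metis
qed

lemma perm_cycle_balanced:
  assumes fin: "finite P" and fP: "f ` P = P"
  shows "indeg ((\<lambda>v. (v, f v)) ` P) v = outdeg ((\<lambda>v. (v, f v)) ` P) v"
proof -
  have inj: "inj_on f P" using fin fP by (simp add: eq_card_imp_inj_on)
  have o: "{w. (v, w) \<in> (\<lambda>v. (v, f v)) ` P} = (if v \<in> P then {f v} else {})" by auto
  have i: "{u. (u, v) \<in> (\<lambda>v. (v, f v)) ` P} = {u \<in> P. f u = v}" by auto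
  show ?thesis
  proof (cases "v \<in> P")
    case True
    then obtain u where u: "u \<in> P" "f u = v" using fP by force
    then have "{u \<in> P. f u = v} = {u}" using inj by (auto simp: inj_on_def)
    then show ?thesis unfolding indeg_def outdeg_def using o i True by simp
  next
    case False
    then have e: "{u \<in> P. f u = v} = {}" using fP by auto
    show ?thesis unfolding indeg_def outdeg_def o i e using False by simp
  qed
qed

lemma topo:
  assumes "finite V"
    and "\<forall>S. S \<subseteq> V \<longrightarrow> S \<noteq> {} \<longrightarrow> (\<exists>v\<in>S. \<forall>w\<in>S. (v, w) \<notin> D)"
  shows "\<exists>\<pi>::'a \<Rightarrow> nat. inj_on \<pi> V \<and> \<pi> ` V \<subseteq> {..<card V} \<and>
           (\<forall>x\<in>V. \<forall>y\<in>V. (x, y) \<in> D \<longrightarrow> \<pi> x < \<pi> y)"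
  using assms
proof (induction V rule: finite_remove_induct)
  case empty
  then show ?case by auto
next
  case (remove V)
  then obtain v where v: "v \<in> V" "\<forall>w\<in>V. (v, w) \<notin> D" by blast
  have "\<forall>S. S \<subseteq> V - {v} \<longrightarrow> S \<noteq> {} \<longrightarrow> (\<exists>v\<in>S. \<forall>w\<in>S. (v, w) \<notin> D)"
    using remove.prems by blast
  with remove.IH[OF v(1)] obtain \<pi> :: "'a \<Rightarrow> nat" where
    p: "inj_on \<pi> (V - {v})" "\<pi> ` (V - {v}) \<subseteq> {..<card (V - {v})}"
       "\<forall>x\<in>V - {v}. \<forall>y\<in>V - {v}. (x, y) \<in> D \<longrightarrow> \<pi> x < \<pi> y" by blast
  have cV: "card (V - {v}) = card V - 1" using v(1) remove.hyps(1) by simp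
  have pos: "card V > 0" using v(1) remove.hyps(1) card_gt_0_iff by blast
  define \<sigma> where "\<sigma> = \<pi>(v := card V - 1)"
  show ?case
  proof (intro exI conjI ballI impI)
    show "inj_on \<sigma> V"
      unfolding inj_on_def
    proof (intro ballI impI)
      fix x y assume xy: "x \<in> V" "y \<in> V" "\<sigma> x = \<sigma> y"
      show "x = y"
      proof (cases "x = v"; cases "y = v")
        assume "x = v" "y \<noteq> v" then show ?thesis using xy p(2) cV unfolding \<sigma>_def by fastforce
      next
        assume "x \<noteq> v" "y = v" then show ?thesis using xy p(2) cV unfolding \<sigma>_def by fastforce
      next
        assume "x \<noteq> v" "y \<noteq> v" then show ?thesis using xy p(1) unfolding \<sigma>_def inj_on_def by auto
      qed simp
    qed
    show "\<sigma> ` V \<subseteq> {..<card V}" using p(2) cV pos unfolding \<sigma>_def by fastforce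
    fix x y assume xy: "x \<in> V" "y \<in> V" "(x, y) \<in> D"
    have "x \<noteq> v" using v xy by auto
    show "\<sigma> x < \<sigma> y"
    proof (cases "y = v")
      case True then show ?thesis using \<open>x \<noteq> v\<close> xy p(2) cV unfolding \<sigma>_def by fastforce
    next
      case False then show ?thesis using \<open>x \<noteq> v\<close> xy p(3) unfolding \<sigma>_def by auto
    qed
  qed
qed



lemma card_filter_sum: "finite A \<Longrightarrow> real (card {x\<in>A. P x}) = (\<Sum>x\<in>A. if P x then 1 else 0)"
proof (induction A rule: finite_induct)
  case empty then show ?case by simp
next
  case (insert a A)
  have "{x \<in> insert a A. P x} = (if P a then insert a {x\<in>A. P x} else {x\<in>A. P x})" by auto
  then show ?case using insert by (simp split: if_splits)
qed

lemma sum_lin: "(\<Sum>i\<in>{1..k}. (m - n * (real i - 1))) = real k * m - n * real k * (real k - 1) / 2"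
proof (induction k)
  case 0 then show ?case by simp
next
  case (Suc k)
  have "{1..Suc k} = insert (Suc k) {1..k}" by auto
  then have "(\<Sum>i\<in>{1..Suc k}. (m - n * (real i - 1))) = (m - n * real k) + (\<Sum>i\<in>{1..k}. (m - n * (real i - 1)))"
    by simp
  also have "\<dots> = real (Suc k) * m - n * real (Suc k) * (real (Suc k) - 1) / 2"
    using Suc by (simp add: field_simps)
  finally show ?case .
qed

lemma gap_lower:
  fixes \<pi> :: "'a \<Rightarrow> nat"
  assumes fin: "finite V" and inj: "inj_on \<pi> V" and sub: "D \<subseteq> V \<times> V"
    and ord: "\<forall>x y. (x, y) \<in> D \<longrightarrow> \<pi> x < \<pi> y"
  shows "real k * real (card D) - real (card V) * real k * (real k - 1) / 2
           \<le> (\<Sum>a\<in>D. real (\<pi> (snd a) - \<pi> (fst a)))"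
proof -
  define g where "g a = \<pi> (snd a) - \<pi> (fst a)" for a
  have finD: "finite D" using fin sub finite_subset by blast
  have gpos: "g a \<ge> 1" if "a \<in> D" for a
  proof -
    obtain x y where xy: "a = (x, y)" by (cases a)
    then have "\<pi> x < \<pi> y" using ord that by blast
    then show ?thesis using xy unfolding g_def by simp
  qed
  have cnt: "card {a\<in>D. g a < i} \<le> card V * (i - 1)" for i
  proof -
    have "inj_on (\<lambda>a. (fst a, g a)) {a\<in>D. g a < i}"
    proof (rule inj_onI)
      fix a b assume a: "a \<in> {a\<in>D. g a < i}" and b: "b \<in> {a\<in>D. g a < i}"
        and eq: "(fst a, g a) = (fst b, g b)"
      obtain x y where axy: "a = (x, y)" by (cases a)
      obtain x' y' where bxy: "b = (x', y')" by (cases b)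
      have "x = x'" using eq axy bxy by simp
      moreover have "\<pi> x < \<pi> y" "\<pi> x' < \<pi> y'" using a b axy bxy ord by auto
      moreover have "g a = g b" using eq by (simp only: prod.inject)
      then have "\<pi> y - \<pi> x = \<pi> y' - \<pi> x'" using axy bxy unfolding g_def by simp
      ultimately have "\<pi> y = \<pi> y'" by simp
      moreover have "y \<in> V" "y' \<in> V" using a b axy bxy sub by auto
      ultimately have "y = y'" using inj by (simp add: inj_on_def)
      then show "a = b" using axy bxy \<open>x = x'\<close> by simp
    qed
    moreover have "(\<lambda>a. (fst a, g a)) ` {a\<in>D. g a < i} \<subseteq> V \<times> {1..<i}"
    proof (rule image_subsetI)
      fix a assume a: "a \<in> {a\<in>D. g a < i}"
      then have "fst a \<in> V" using sub by auto
      moreover have "g a \<in> {1..<i}" using a gpos by auto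
      ultimately show "(fst a, g a) \<in> V \<times> {1..<i}" by simp
    qed
    ultimately have "card {a\<in>D. g a < i} \<le> card (V \<times> {1..<i})"
      using card_inj_on_le fin by blast
    then show ?thesis by (simp add: card_cartesian_product)
  qed
  have c2: "real (card {a\<in>D. i \<le> g a}) \<ge> real (card D) - real (card V) * (real i - 1)"
    if "i \<ge> 1" for i
  proof -
    have "{a\<in>D. i \<le> g a} = D - {a\<in>D. g a < i}" by auto
    then have "card {a\<in>D. i \<le> g a} = card D - card {a\<in>D. g a < i}"
      using card_Diff_subset[of "{a\<in>D. g a < i}" D] finD finite_subset by auto
    moreover have "card {a\<in>D. g a < i} \<le> card D" using finD by (simp add: card_mono)
    ultimately have "real (card {a\<in>D. i \<le> g a}) = real (card D) - real (card {a\<in>D. g a < i})"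
      by simp
    moreover have "real (card {a\<in>D. g a < i}) \<le> real (card V) * (real i - 1)"
    proof -
      have "real (card {a\<in>D. g a < i}) \<le> real (card V * (i - 1))" using cnt[of i] by linarith
      also have "\<dots> = real (card V) * (real i - 1)" using that by (simp add: of_nat_diff)
      finally show ?thesis .
    qed
    ultimately show ?thesis by linarith
  qed
  have le: "real (card {i\<in>{1..k}. i \<le> g a}) \<le> real (g a)" for a
  proof -
    have "{i\<in>{1..k}. i \<le> g a} \<subseteq> {1..g a}" by auto
    then have "card {i\<in>{1..k}. i \<le> g a} \<le> card {1..g a}" by (rule card_mono[OF finite_atLeastAtMost])
    then show ?thesis by simp
  qed
  have sw: "(\<Sum>a\<in>D. real (card {i\<in>{1..k}. i \<le> g a})) = (\<Sum>i\<in>{1..k}. real (card {a\<in>D. i \<le> g a}))"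
  proof -
    have "(\<Sum>a\<in>D. real (card {i\<in>{1..k}. i \<le> g a})) = (\<Sum>a\<in>D. \<Sum>i\<in>{1..k}. if i \<le> g a then 1 else 0)"
      by (rule sum.cong[OF refl], rule card_filter_sum, simp)
    also have "\<dots> = (\<Sum>i\<in>{1..k}. \<Sum>a\<in>D. if i \<le> g a then 1 else 0)" by (rule sum.swap)
    also have "\<dots> = (\<Sum>i\<in>{1..k}. real (card {a\<in>D. i \<le> g a}))"
      by (rule sum.cong[OF refl], rule card_filter_sum[symmetric], rule finD)
    finally show ?thesis .
  qed
  have "real k * real (card D) - real (card V) * real k * (real k - 1) / 2
        = (\<Sum>i\<in>{1..k}. (real (card D) - real (card V) * (real i - 1)))"
    by (rule sum_lin[symmetric])
  also have "\<dots> \<le> (\<Sum>i\<in>{1..k}. real (card {a\<in>D. i \<le> g a}))"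
    by (rule sum_mono) (use c2 in auto)
  also have "\<dots> = (\<Sum>a\<in>D. real (card {i\<in>{1..k}. i \<le> g a}))" using sw by simp
  also have "\<dots> \<le> (\<Sum>a\<in>D. real (g a))" by (rule sum_mono) (rule le)
  finally show ?thesis unfolding g_def .
qed



lemma in_sum:
  fixes h :: "'a \<Rightarrow> real"
  assumes finV: "finite V" and finA: "finite A" and sub: "A \<subseteq> V \<times> V"
  shows "(\<Sum>a\<in>A. h (snd a)) = (\<Sum>v\<in>V. h v * real (indeg A v))"
proof -
  have "(\<Sum>a\<in>A. h (snd a)) = (\<Sum>v\<in>V. \<Sum>a\<in>{x. x\<in>A \<and> snd x = v}. h (snd a))"
    by (rule sum.group[symmetric]) (use finA finV sub in auto)
  also have "\<dots> = (\<Sum>v\<in>V. h v * real (indeg A v))"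
  proof (rule sum.cong[OF refl])
    fix v assume "v \<in> V"
    have "(\<Sum>a\<in>{x. x\<in>A \<and> snd x = v}. h (snd a)) = (\<Sum>a\<in>{x. x\<in>A \<and> snd x = v}. h v)"
      by (rule sum.cong) auto
    also have "\<dots> = h v * real (card {x. x\<in>A \<and> snd x = v})" by simp
    also have "card {x. x\<in>A \<and> snd x = v} = indeg A v"
    proof -
      have "{x. x\<in>A \<and> snd x = v} = (\<lambda>u. (u, v)) ` {u. (u, v) \<in> A}" by force
      moreover have "card ((\<lambda>u. (u, v)) ` {u. (u, v) \<in> A}) = indeg A v" unfolding indeg_def
        by (rule card_image) (auto simp: inj_on_def)
      ultimately show ?thesis by simp
    qed
    finally show "(\<Sum>a\<in>{x. x\<in>A \<and> snd x = v}. h (snd a)) = h v * real (indeg A v)" .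
  qed
  finally show ?thesis .
qed

lemma out_sum:
  fixes h :: "'a \<Rightarrow> real"
  assumes finV: "finite V" and finA: "finite A" and sub: "A \<subseteq> V \<times> V"
  shows "(\<Sum>a\<in>A. h (fst a)) = (\<Sum>v\<in>V. h v * real (outdeg A v))"
proof -
  have "(\<Sum>a\<in>A. h (fst a)) = (\<Sum>v\<in>V. \<Sum>a\<in>{x. x\<in>A \<and> fst x = v}. h (fst a))"
    by (rule sum.group[symmetric]) (use finA finV sub in auto)
  also have "\<dots> = (\<Sum>v\<in>V. h v * real (outdeg A v))"
  proof (rule sum.cong[OF refl])
    fix v assume "v \<in> V"
    have "(\<Sum>a\<in>{x. x\<in>A \<and> fst x = v}. h (fst a)) = (\<Sum>a\<in>{x. x\<in>A \<and> fst x = v}. h v)"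
      by (rule sum.cong) auto
    also have "\<dots> = h v * real (card {x. x\<in>A \<and> fst x = v})" by simp
    also have "card {x. x\<in>A \<and> fst x = v} = outdeg A v"
    proof -
      have "{x. x\<in>A \<and> fst x = v} = (\<lambda>u. (v, u)) ` {u. (v, u) \<in> A}" by force
      moreover have "card ((\<lambda>u. (v, u)) ` {u. (v, u) \<in> A}) = outdeg A v" unfolding outdeg_def
        by (rule card_image) (auto simp: inj_on_def)
      ultimately show ?thesis by simp
    qed
    finally show "(\<Sum>a\<in>{x. x\<in>A \<and> fst x = v}. h (fst a)) = h v * real (outdeg A v)" .
  qed
  finally show ?thesis .
qed

lemma flow_zero:
  fixes h :: "'a \<Rightarrow> real"
  assumes finV: "finite V" and finA: "finite A" and sub: "A \<subseteq> V \<times> V"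
    and bal: "\<forall>v\<in>V. indeg A v = outdeg A v"
  shows "(\<Sum>a\<in>A. h (snd a) - h (fst a)) = 0"
  using in_sum[OF assms(1-3), of h] out_sum[OF assms(1-3), of h] bal
  by (simp add: sum_subtractf)

lemma final_arith:
  fixes m n t :: nat and S :: real
  assumes n2: "n \<ge> 2" and tle: "t \<le> n - 1"
    and Sup: "S \<le> real t * (real n - 1)"
    and Slow: "\<And>k::nat. real k * real m - real n * real k * (real k - 1) / 2 \<le> S"
  shows "real (t + m) \<le> sqrt (2 * (real n - 1)) * real n + real n - 1"
proof -
  define s where "s = sqrt (2 * (real n - 1))"
  have s0: "s > 0" using n2 unfolding s_def by simp
  have ss: "s * s = 2 * (real n - 1)" using n2 unfolding s_def by simp
  have "real m \<le> real n * s"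
  proof (rule ccontr)
    assume "\<not> ?thesis"
    then have mgt: "real m > real n * s" by simp
    define k where "k = nat \<lceil>s\<rceil>"
    have k1: "real k \<ge> s" "real k < s + 1" unfolding k_def using s0
      by linarith+
    have kpos: "real k > 0" using k1 s0 by linarith
    have km: "real k * real m > real k * (real n * s)" using mgt kpos by simp
    have "(real k - s) * (real k - s) \<le> real k - s"
      using k1 by (intro mult_left_le) auto
    moreover have "(real k - s) * (real k - s) = real k * real k - 2 * real k * s + s * s"
      by (simp add: algebra_simps)
    ultimately have "2 * real k * s - real k * real k + real k \<ge> 2 * (real n - 1)"
      using ss s0 by linarith
    then have "real k * s - real k * (real k - 1) / 2 \<ge> (real n - 1)"
      by (simp add: field_simps)
    then have "real n * (real k * s - real k * (real k - 1) / 2) \<ge> real n * (real n - 1)"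
      using n2 by (intro mult_left_mono) auto
    with km have "S > real n * (real n - 1)"
      using Slow[of k] by (simp add: algebra_simps)
    moreover have "real t * (real n - 1) \<le> real n * (real n - 1)"
      using tle n2 by (intro mult_right_mono) auto
    ultimately show False using Sup by linarith
  qed
  moreover have "real t \<le> real n - 1" using tle n2 by linarith
  ultimately show ?thesis unfolding s_def by (simp add: algebra_simps)
qed

theorem proposition1p3:
  fixes V :: "'a set" and A :: "('a \<times> 'a) set"
  assumes "minimally_eulerian V A"
  shows "real (card A) \<le> sqrt (2 * (real (card V) - 1)) * real (card V) + real (card V) - 1"
proof -
  from assms have simpl: "simple_digraph V A" and eul: "eulerian_digraph V A"
    and minim: "\<not> (\<exists>A'. A' \<subset> A \<and> eulerian_digraph V A')"
    unfolding minimally_eulerian_def by auto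
  from simpl have finV: "finite V" and sub: "A \<subseteq> V \<times> V" and noloop: "\<forall>v. (v, v) \<notin> A"
    unfolding simple_digraph_def by auto
  from eul have con: "connected_digraph V A" and bal: "\<forall>v\<in>V. indeg A v = outdeg A v"
    unfolding eulerian_digraph_def by auto
  have finA: "finite A" using finV sub finite_subset by blast
  have Vne: "V \<noteq> {}" using con unfolding connected_digraph_def by auto
  show ?thesis
  proof (cases "card V \<ge> 2")
    case False
    have "card V > 0" using Vne finV card_gt_0_iff by blast
    then have c1: "card V = 1" using False by linarith
    then obtain v where "V = {v}" using card_1_singletonE by blast
    then have "A = {}" using sub noloop by auto
    then show ?thesis using c1 by simp
  next
    case True
    obtain T where T: "T \<subseteq> A" "card T \<le> card V - 1" "connected_digraph V T"
      using spanning_tree[OF finV sub con] by blast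
    define D where "D = A - T"
    have sink: "\<forall>S. S \<subseteq> V \<longrightarrow> S \<noteq> {} \<longrightarrow> (\<exists>v\<in>S. \<forall>w\<in>S. (v, w) \<notin> D)"
    proof (intro allI impI, rule ccontr)
      fix S assume S: "S \<subseteq> V" "S \<noteq> {}" "\<not> (\<exists>v\<in>S. \<forall>w\<in>S. (v, w) \<notin> D)"
      then have "\<forall>v\<in>S. \<exists>w. w \<in> S \<and> (v, w) \<in> D" by blast
      then obtain f where f: "\<forall>v\<in>S. f v \<in> S \<and> (v, f v) \<in> D" by metis
      have finS: "finite S" using S(1) finV finite_subset by blast
      have "f ` S \<subseteq> S" using f by auto
      from stable_image[OF finS S(2) this] obtain P where P: "P \<subseteq> S" "P \<noteq> {}" "f ` P = P"
        by blast
      define C where "C = (\<lambda>v. (v, f v)) ` P"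
      have CD: "C \<subseteq> D" using P f unfolding C_def by auto
      then have CA: "C \<subseteq> A" unfolding D_def by auto
      have "C \<noteq> {}" using P(2) unfolding C_def by simp
      then have psub: "A - C \<subset> A" using CA by blast
      have finP: "finite P" using P(1) finS finite_subset by blast
      have Cbal: "indeg C v = outdeg C v" for v
        using perm_cycle_balanced[OF finP P(3)] unfolding C_def .
      have "eulerian_digraph V (A - C)"
        unfolding eulerian_digraph_def
      proof (intro conjI ballI)
        have "T \<subseteq> A - C" using CD T(1) unfolding D_def by auto
        then have "(T \<union> T\<inverse>)\<^sup>* \<subseteq> ((A - C) \<union> (A - C)\<inverse>)\<^sup>*" by (intro rtrancl_mono) auto
        then show "connected_digraph V (A - C)" using T(3) unfolding connected_digraph_def by blast
        fix v assume "v \<in> V"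
        show "indeg (A - C) v = outdeg (A - C) v"
          using indeg_diff[OF finA CA] outdeg_diff[OF finA CA] bal Cbal \<open>v \<in> V\<close> by simp
      qed
      then show False using minim psub by blast
    qed
    obtain \<pi> :: "'a \<Rightarrow> nat" where \<pi>: "inj_on \<pi> V" "\<pi> ` V \<subseteq> {..<card V}"
      "\<forall>x\<in>V. \<forall>y\<in>V. (x, y) \<in> D \<longrightarrow> \<pi> x < \<pi> y"
      using topo[OF finV sink] by blast
    have Dsub: "D \<subseteq> V \<times> V" using sub unfolding D_def by auto
    have ord: "\<forall>x y. (x, y) \<in> D \<longrightarrow> \<pi> x < \<pi> y" using \<pi>(3) Dsub by blast
    define S where "S = (\<Sum>a\<in>D. real (\<pi> (snd a) - \<pi> (fst a)))"
    have Sreal: "S = (\<Sum>a\<in>D. real (\<pi> (snd a)) - real (\<pi> (fst a)))"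
      unfolding S_def
    proof (rule sum.cong[OF refl])
      fix a assume "a \<in> D"
      then have "\<pi> (fst a) < \<pi> (snd a)" using ord by (cases a) auto
      then show "real (\<pi> (snd a) - \<pi> (fst a)) = real (\<pi> (snd a)) - real (\<pi> (fst a))"
        by (simp add: of_nat_diff)
    qed
    have zero: "(\<Sum>a\<in>A. real (\<pi> (snd a)) - real (\<pi> (fst a))) = 0"
      using flow_zero[OF finV finA sub bal, of "\<lambda>v. real (\<pi> v)"] by simp
    have split: "(\<Sum>a\<in>A. real (\<pi> (snd a)) - real (\<pi> (fst a)))
        = (\<Sum>a\<in>D. real (\<pi> (snd a)) - real (\<pi> (fst a))) + (\<Sum>a\<in>T. real (\<pi> (snd a)) - real (\<pi> (fst a)))"
      unfolding D_def by (rule sum.subset_diff[OF T(1) finA])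
    have Tbound: "(\<Sum>a\<in>T. real (\<pi> (fst a)) - real (\<pi> (snd a))) \<le> real (card T) * (real (card V) - 1)"
    proof (rule sum_bounded_above)
      fix a assume "a \<in> T"
      then have "fst a \<in> V" using T(1) sub by auto
      then have "\<pi> (fst a) < card V" using \<pi>(2) by auto
      then show "real (\<pi> (fst a)) - real (\<pi> (snd a)) \<le> real (card V) - 1" by linarith
    qed
    have "(\<Sum>a\<in>T. real (\<pi> (fst a)) - real (\<pi> (snd a))) = - (\<Sum>a\<in>T. real (\<pi> (snd a)) - real (\<pi> (fst a)))"
      by (simp add: sum_negf[symmetric])
    then have Sup: "S \<le> real (card T) * (real (card V) - 1)"
      using Tbound zero split Sreal by linarith
    have Slow: "real k * real (card D) - real (card V) * real k * (real k - 1) / 2 \<le> S" for k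
      unfolding S_def by (rule gap_lower[OF finV \<pi>(1) Dsub ord])
    have finT: "finite T" using T(1) finA finite_subset by blast
    have "card D = card A - card T" unfolding D_def using card_Diff_subset[OF finT T(1)] .
    moreover have "card T \<le> card A" using card_mono[OF finA T(1)] .
    ultimately have cA: "card A = card T + card D" by simp
    show ?thesis unfolding cA
      by (rule final_arith[OF True T(2) Sup Slow])
  qed
qed

end
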